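(* Let $G$ be a subgroup of $K^*$ and let $K^*$ act on the set of left cosets $K^*/G$ by ${}^{a}(bG)=(ab)G$. Then: (1) A function $f\colon K^*/G\to K$ is skew convex if and only if there exists a right $G$-linear map $\phi_f\colon K\to K$ such that $f(xG)=\phi_f(x)x^{-1}$ for all $x\in K^*$; such $\phi_f$ is unique. (2) The assignment $f\mapsto\phi_f$ is a ring isomorphism from $\mathcal S(K^*/G)$ onto the ring $\mathrm{End}(K_G)$ of right $G$-linear maps $K\to K$ (with pointwise addition and composition as multiplication).
   Context: Let $K$ be a skew field, $K^*=K\setminus\{0\}$. For a nonempty set $Z$ with a left $K^*$-action $(a,z)\mapsto{}^{a}z$, $\mathcal F(Z)$ is the set of functions $Z\to K$ with pointwise addition; the constant function with value $a\in K$ is denoted $a$. The skew product is $(f\diamond g)(z)=f({}^{g(z)}z)\,g(z)$ if $g(z)\neq0$ and $0$ if $g(z)=0$. A function $f$ is skew convex if $f\diamond(a+b)=f\diamond a+f\diamond b$ for all $a,b\in K$; $\mathcal S(Z)$ is the ring of skew-convex functions on $Z$ under pointwise addition and $\diamond$. A map $\phi\colon K\to K$ is right $G$-linear if $\phi(a-b)=\phi(a)-\phi(b)$ and $\phi(ac)=\phi(a)c$ for all $a,b\in K$, $c\in G$. *)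

theory Defs
  imports Main "HOL-Library.FuncSet"
begin

text \<open>Skew field K = type of class division_ring; K^* = K - {0}.\<close>

definition skew_prod :: "('a \<Rightarrow> 'z \<Rightarrow> 'z) \<Rightarrow> ('z \<Rightarrow> 'a::division_ring) \<Rightarrow> ('z \<Rightarrow> 'a) \<Rightarrow> 'z \<Rightarrow> 'a" where
  "skew_prod act f g z = (if g z = 0 then 0 else f (act (g z) z) * g z)"

definition skew_convex :: "'z set \<Rightarrow> ('a \<Rightarrow> 'z \<Rightarrow> 'z) \<Rightarrow> ('z \<Rightarrow> 'a::division_ring) \<Rightarrow> bool" where
  "skew_convex Z act f \<longleftrightarrow>
     (\<forall>a b. \<forall>z\<in>Z. skew_prod act f (\<lambda>_. a + b) z
                    = skew_prod act f (\<lambda>_. a) z + skew_prod act f (\<lambda>_. b) z)"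

definition S_carrier :: "'z set \<Rightarrow> ('a \<Rightarrow> 'z \<Rightarrow> 'z) \<Rightarrow> ('z \<Rightarrow> 'a::division_ring) set" where
  "S_carrier Z act = {f. f \<in> extensional Z \<and> skew_convex Z act f}"

definition S_add :: "'z set \<Rightarrow> ('z \<Rightarrow> 'a::division_ring) \<Rightarrow> ('z \<Rightarrow> 'a) \<Rightarrow> 'z \<Rightarrow> 'a" where
  "S_add Z f g = (\<lambda>z\<in>Z. f z + g z)"

definition S_mult :: "'z set \<Rightarrow> ('a \<Rightarrow> 'z \<Rightarrow> 'z) \<Rightarrow> ('z \<Rightarrow> 'a::division_ring) \<Rightarrow> ('z \<Rightarrow> 'a) \<Rightarrow> 'z \<Rightarrow> 'a" where
  "S_mult Z act f g = (\<lambda>z\<in>Z. skew_prod act f g z)"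

definition S_one :: "'z set \<Rightarrow> 'z \<Rightarrow> 'a::division_ring" where
  "S_one Z = (\<lambda>z\<in>Z. 1)"

definition mult_subgroup :: "'a::division_ring set \<Rightarrow> bool" where
  "mult_subgroup G \<longleftrightarrow> 0 \<notin> G \<and> 1 \<in> G \<and> (\<forall>x\<in>G. \<forall>y\<in>G. x * y \<in> G) \<and> (\<forall>x\<in>G. inverse x \<in> G)"

definition lcoset :: "'a::division_ring \<Rightarrow> 'a set \<Rightarrow> 'a set" where
  "lcoset x G = (\<lambda>g. x * g) ` G"

definition cosets :: "'a::division_ring set \<Rightarrow> 'a set set" where
  "cosets G = {lcoset x G | x. x \<noteq> 0}"

definition coset_act :: "'a::division_ring \<Rightarrow> 'a set \<Rightarrow> 'a set" where
  "coset_act a z = (\<lambda>y. a * y) ` z"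

definition right_G_linear :: "'a::division_ring set \<Rightarrow> ('a \<Rightarrow> 'a) \<Rightarrow> bool" where
  "right_G_linear G \<phi> \<longleftrightarrow> (\<forall>a b. \<phi> (a - b) = \<phi> a - \<phi> b) \<and> (\<forall>a. \<forall>c\<in>G. \<phi> (a * c) = \<phi> a * c)"

definition phi_of :: "'a::division_ring set \<Rightarrow> ('a set \<Rightarrow> 'a) \<Rightarrow> 'a \<Rightarrow> 'a" where
  "phi_of G f = (THE \<phi>. right_G_linear G \<phi> \<and> (\<forall>x. x \<noteq> 0 \<longrightarrow> f (lcoset x G) = \<phi> x * inverse x))"

end

theory Submission
  imports Defs
begin

lemma rgl_zero: "right_G_linear G \<phi> \<Longrightarrow> \<phi> 0 = 0"
  unfolding right_G_linear_def by (metis diff_self)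

lemma rgl_add: "right_G_linear G \<phi> \<Longrightarrow> \<phi> (a + b) = \<phi> a + \<phi> b"
proof -
  assume h: "right_G_linear G \<phi>"
  have z: "\<phi> 0 = 0" using rgl_zero[OF h] .
  have n: "\<phi> (- b) = - \<phi> b" using h z unfolding right_G_linear_def
    by (metis diff_0)
  have "\<phi> (a - (- b)) = \<phi> a - \<phi> (-b)" using h unfolding right_G_linear_def by blast
  then show ?thesis using n by simp
qed

lemma act_lcoset: "coset_act a (lcoset x G) = lcoset (a * x) G"
  unfolding coset_act_def lcoset_def image_image by (simp add: mult.assoc)

lemma lcoset_G:
  assumes "mult_subgroup G" "c \<in> G" shows "lcoset (x * c) G = lcoset x G"
proof -
  have ci: "inverse c \<in> G" "c \<noteq> 0" using assms unfolding mult_subgroup_def by auto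
  show ?thesis unfolding lcoset_def
  proof (intro equalityI subsetI)
    fix y assume "y \<in> (*) (x * c) ` G"
    then obtain g where g: "g \<in> G" "y = x * c * g" by auto
    have "c * g \<in> G" using assms g unfolding mult_subgroup_def by auto
    then show "y \<in> (*) x ` G" using g by (auto simp: mult.assoc)
  next
    fix y assume "y \<in> (*) x ` G"
    then obtain g where g: "g \<in> G" "y = x * g" by auto
    have "inverse c * g \<in> G" using assms g ci unfolding mult_subgroup_def by auto
    moreover have "y = x * c * (inverse c * g)" using g ci
      by (simp add: mult.assoc[symmetric]) (simp add: mult.assoc)
    ultimately show "y \<in> (*) (x * c) ` G" by auto
  qed
qed

lemma lcoset_eq:
  assumes "mult_subgroup G" "lcoset x G = lcoset y G" shows "\<exists>c\<in>G. y = x * c"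
proof -
  have "1 \<in> G" using assms unfolding mult_subgroup_def by auto
  then have "y \<in> lcoset y G" unfolding lcoset_def by force
  then show ?thesis using assms(2) unfolding lcoset_def by auto
qed

lemma phi_of_eq:
  assumes "right_G_linear G \<phi>" "\<forall>x. x \<noteq> 0 \<longrightarrow> h (lcoset x G) = \<phi> x * inverse x"
  shows "phi_of G h = \<phi>"
  unfolding phi_of_def
proof (rule the_equality)
  show "right_G_linear G \<phi> \<and> (\<forall>x. x \<noteq> 0 \<longrightarrow> h (lcoset x G) = \<phi> x * inverse x)" using assms by blast
next
  fix \<psi> assume a: "right_G_linear G \<psi> \<and> (\<forall>x. x \<noteq> 0 \<longrightarrow> h (lcoset x G) = \<psi> x * inverse x)"
  show "\<psi> = \<phi>"
  proof
    fix x show "\<psi> x = \<phi> x"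
    proof (cases "x = 0")
      case True then show ?thesis using rgl_zero assms(1) a by metis
    next
      case False
      then have "\<psi> x * inverse x = \<phi> x * inverse x" using a assms by metis
      then have "\<psi> x * inverse x * x = \<phi> x * inverse x * x" by simp
      then show ?thesis using False by (simp add: mult.assoc)
    qed
  qed
qed

lemma skew_const: "skew_prod coset_act f (\<lambda>_. a) z = (if a = 0 then 0 else f (coset_act a z) * a)"
  unfolding skew_prod_def by simp

lemma one_coset: "mult_subgroup G \<Longrightarrow> lcoset 1 G \<in> cosets G"
  unfolding cosets_def by auto

definition phiF :: "'a::division_ring set \<Rightarrow> ('a set \<Rightarrow> 'a) \<Rightarrow> 'a \<Rightarrow> 'a" where
  "phiF G f = (\<lambda>y. if y = 0 then 0 else f (lcoset y G) * y)"

lemma forward: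
  assumes G: "mult_subgroup G" and sc: "skew_convex (cosets G) coset_act f"
  shows "right_G_linear G (phiF G f) \<and> (\<forall>x. x \<noteq> 0 \<longrightarrow> f (lcoset x G) = phiF G f x * inverse x)"
proof -
  have e: "skew_prod coset_act f (\<lambda>_. a) (lcoset 1 G) = phiF G f a" for a
    unfolding skew_const act_lcoset phiF_def by simp
  have add: "phiF G f (a + b) = phiF G f a + phiF G f b" for a b
    using sc one_coset[OF G] unfolding skew_convex_def e[symmetric] by blast
  have sub: "phiF G f (a - b) = phiF G f a - phiF G f b" for a b
    using add[of "a - b" b] by (simp add: eq_diff_eq)
  have rg: "phiF G f (a * c) = phiF G f a * c" if c: "c \<in> G" for a c
  proof -
    have "c \<noteq> 0" using G c unfolding mult_subgroup_def by auto
    then show ?thesis unfolding phiF_def using lcoset_G[OF G c, of a]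
      by (simp add: mult.assoc)
  qed
  show ?thesis
    unfolding right_G_linear_def using sub rg
    by (auto simp: phiF_def mult.assoc)
qed

lemma backward:
  assumes G: "mult_subgroup G" and r: "right_G_linear G \<phi>"
    and h: "\<forall>x. x \<noteq> 0 \<longrightarrow> f (lcoset x G) = \<phi> x * inverse x"
  shows "skew_convex (cosets G) coset_act f"
proof -
  have e: "skew_prod coset_act f (\<lambda>_. a) (lcoset x G) = \<phi> (a * x) * inverse x"
    if x: "x \<noteq> 0" for a x
  proof (cases "a = 0")
    case True then show ?thesis using rgl_zero[OF r] by (simp add: skew_const)
  next
    case False
    have "f (lcoset (a * x) G) * a = \<phi> (a * x) * (inverse x * inverse a) * a"
      using h False x by (simp add: nonzero_inverse_mult_distrib)
    also have "\<dots> = \<phi> (a * x) * inverse x" using False by (simp add: mult.assoc)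
    finally show ?thesis using False by (simp add: skew_const act_lcoset)
  qed
  show ?thesis unfolding skew_convex_def
  proof (intro allI ballI)
    fix a b z assume "z \<in> cosets G"
    then obtain x where x: "x \<noteq> 0" "z = lcoset x G" unfolding cosets_def by auto
    show "skew_prod coset_act f (\<lambda>_. a + b) z = skew_prod coset_act f (\<lambda>_. a) z + skew_prod coset_act f (\<lambda>_. b) z"
      using x e rgl_add[OF r] by (simp add: distrib_right)
  qed
qed

lemma phi_of_S:
  assumes G: "mult_subgroup G" and f: "f \<in> S_carrier (cosets G) coset_act"
  shows "right_G_linear G (phi_of G f) \<and> (\<forall>x. x \<noteq> 0 \<longrightarrow> f (lcoset x G) = phi_of G f x * inverse x)"
proof -
  have sc: "skew_convex (cosets G) coset_act f" using f unfolding S_carrier_def by auto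
  have "phi_of G f = phiF G f" using forward[OF G sc] phi_of_eq by blast
  then show ?thesis using forward[OF G sc] by simp
qed

lemma lc_in: "x \<noteq> 0 \<Longrightarrow> lcoset x G \<in> cosets G"
  unfolding cosets_def by auto

theorem proposition2p7:
  fixes G :: "'a::division_ring set"
  assumes "mult_subgroup G"
  shows "(\<forall>f :: 'a set \<Rightarrow> 'a.
           skew_convex (cosets G) coset_act f \<longleftrightarrow>
           (\<exists>!\<phi>. right_G_linear G \<phi> \<and> (\<forall>x. x \<noteq> 0 \<longrightarrow> f (lcoset x G) = \<phi> x * inverse x)))
       \<and> bij_betw (phi_of G) (S_carrier (cosets G) coset_act) {\<phi>. right_G_linear G \<phi>}
       \<and> (\<forall>f\<in>S_carrier (cosets G) coset_act. \<forall>g\<in>S_carrier (cosets G) coset_act.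
           phi_of G (S_add (cosets G) f g) = (\<lambda>x. phi_of G f x + phi_of G g x))
       \<and> (\<forall>f\<in>S_carrier (cosets G) coset_act. \<forall>g\<in>S_carrier (cosets G) coset_act.
           phi_of G (S_mult (cosets G) coset_act f g) = phi_of G f \<circ> phi_of G g)
       \<and> phi_of G (S_one (cosets G)) = id"
proof (intro conjI)
  note G = assms
  show "\<forall>f :: 'a set \<Rightarrow> 'a.
           skew_convex (cosets G) coset_act f \<longleftrightarrow>
           (\<exists>!\<phi>. right_G_linear G \<phi> \<and> (\<forall>x. x \<noteq> 0 \<longrightarrow> f (lcoset x G) = \<phi> x * inverse x))"
  proof (intro allI iffI)
    fix f assume sc: "skew_convex (cosets G) coset_act f"
    show "\<exists>!\<phi>. right_G_linear G \<phi> \<and> (\<forall>x. x \<noteq> 0 \<longrightarrow> f (lcoset x G) = \<phi> x * inverse x)"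
      using forward[OF G sc] phi_of_eq by metis
  next
    fix f assume "\<exists>!\<phi>. right_G_linear G \<phi> \<and> (\<forall>x. x \<noteq> 0 \<longrightarrow> f (lcoset x G) = \<phi> x * inverse x)"
    then show "skew_convex (cosets G) coset_act f" using backward[OF G] by blast
  qed
  show "bij_betw (phi_of G) (S_carrier (cosets G) coset_act) {\<phi>. right_G_linear G \<phi>}"
    unfolding bij_betw_def
  proof (intro conjI)
    show "inj_on (phi_of G) (S_carrier (cosets G) coset_act)"
    proof (rule inj_onI)
      fix f g assume f: "f \<in> S_carrier (cosets G) coset_act" and g: "g \<in> S_carrier (cosets G) coset_act"
        and eq: "phi_of G f = phi_of G g"
      show "f = g"
      proof
        fix z show "f z = g z"
        proof (cases "z \<in> cosets G")
          case True
          then obtain x where "x \<noteq> 0" "z = lcoset x G" unfolding cosets_def by auto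
          then show ?thesis using phi_of_S[OF G f] phi_of_S[OF G g] eq by metis
        next
          case False
          then show ?thesis using f g unfolding S_carrier_def extensional_def by auto
        qed
      qed
    qed
    show "phi_of G ` S_carrier (cosets G) coset_act = {\<phi>. right_G_linear G \<phi>}"
    proof (intro equalityI subsetI)
      fix \<phi> assume "\<phi> \<in> phi_of G ` S_carrier (cosets G) coset_act"
      then show "\<phi> \<in> {\<phi>. right_G_linear G \<phi>}" using phi_of_S[OF G] by auto
    next
      fix \<phi> assume "\<phi> \<in> {\<phi>. right_G_linear G \<phi>}"
      then have r: "right_G_linear G \<phi>" by simp
      define rep where "rep z = (SOME x. x \<noteq> 0 \<and> z = lcoset x G)" for z
      define f where "f = (\<lambda>z\<in>cosets G. \<phi> (rep z) * inverse (rep z))"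
      have h: "f (lcoset x G) = \<phi> x * inverse x" if x: "x \<noteq> 0" for x
      proof -
        have "\<exists>y. y \<noteq> 0 \<and> lcoset x G = lcoset y G" using x by blast
        then have ry: "rep (lcoset x G) \<noteq> 0 \<and> lcoset x G = lcoset (rep (lcoset x G)) G"
          unfolding rep_def by (rule someI_ex)
        then obtain c where c: "c \<in> G" "rep (lcoset x G) = x * c" using lcoset_eq[OF G] by metis
        have c0: "c \<noteq> 0" using G c unfolding mult_subgroup_def by auto
        have "f (lcoset x G) = \<phi> (x * c) * inverse (x * c)" using lc_in[OF x] c unfolding f_def by simp
        also have "\<dots> = \<phi> x * c * (inverse c * inverse x)" using r c c0 x
          unfolding right_G_linear_def by (simp add: nonzero_inverse_mult_distrib)
        also have "\<dots> = \<phi> x * inverse x" using c0 by (simp add: mult.assoc[symmetric]) (simp add: mult.assoc)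
        finally show ?thesis .
      qed
      have "f \<in> S_carrier (cosets G) coset_act"
        unfolding S_carrier_def using backward[OF G r] h by (auto simp: f_def)
      moreover have "phi_of G f = \<phi>" using phi_of_eq[OF r] h by blast
      ultimately show "\<phi> \<in> phi_of G ` S_carrier (cosets G) coset_act" by blast
    qed
  qed
  show "\<forall>f\<in>S_carrier (cosets G) coset_act. \<forall>g\<in>S_carrier (cosets G) coset_act.
           phi_of G (S_add (cosets G) f g) = (\<lambda>x. phi_of G f x + phi_of G g x)"
  proof (intro ballI)
    fix f g assume f: "f \<in> S_carrier (cosets G) coset_act" and g: "g \<in> S_carrier (cosets G) coset_act"
    note pf = phi_of_S[OF G f] and pg = phi_of_S[OF G g]
    have r: "right_G_linear G (\<lambda>x. phi_of G f x + phi_of G g x)"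
      using pf pg unfolding right_G_linear_def by (auto simp: distrib_right)
    show "phi_of G (S_add (cosets G) f g) = (\<lambda>x. phi_of G f x + phi_of G g x)"
      by (rule phi_of_eq[OF r]) (use pf pg lc_in in \<open>auto simp: S_add_def distrib_right\<close>)
  qed
  show "\<forall>f\<in>S_carrier (cosets G) coset_act. \<forall>g\<in>S_carrier (cosets G) coset_act.
           phi_of G (S_mult (cosets G) coset_act f g) = phi_of G f \<circ> phi_of G g"
  proof (intro ballI)
    fix f g assume f: "f \<in> S_carrier (cosets G) coset_act" and g: "g \<in> S_carrier (cosets G) coset_act"
    note pf = phi_of_S[OF G f] and pg = phi_of_S[OF G g]
    have r: "right_G_linear G (phi_of G f \<circ> phi_of G g)"
      using pf pg unfolding right_G_linear_def by auto
    have h: "S_mult (cosets G) coset_act f g (lcoset x G) = (phi_of G f \<circ> phi_of G g) x * inverse x"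
      if x: "x \<noteq> 0" for x
    proof -
      define u where "u = phi_of G g x"
      have gx: "g (lcoset x G) = u * inverse x" using pg x u_def by simp
      show ?thesis
      proof (cases "u = 0")
        case True
        then show ?thesis using gx lc_in[OF x] rgl_zero[OF conjunct1[OF pf]]
          by (simp add: S_mult_def skew_prod_def u_def)
      next
        case False
        then have nz: "u * inverse x \<noteq> 0" using x by simp
        have ca: "coset_act (u * inverse x) (lcoset x G) = lcoset u G"
          using x by (simp add: act_lcoset mult.assoc)
        have "S_mult (cosets G) coset_act f g (lcoset x G) = f (lcoset u G) * (u * inverse x)"
          using lc_in[OF x] gx nz ca by (simp add: S_mult_def skew_prod_def)
        also have "\<dots> = phi_of G f u * inverse u * (u * inverse x)" using pf False by simp
        also have "\<dots> = phi_of G f u * inverse x" using False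
          by (simp add: mult.assoc[symmetric]) (simp add: mult.assoc)
        finally show ?thesis by (simp add: u_def)
      qed
    qed
    show "phi_of G (S_mult (cosets G) coset_act f g) = phi_of G f \<circ> phi_of G g"
      using phi_of_eq[OF r] h by blast
  qed
  show "phi_of G (S_one (cosets G)) = id"
    by (rule phi_of_eq) (auto simp: right_G_linear_def S_one_def lc_in)
qed

end
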